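(* Let $G$ be a finite simple graph with maximum degree $2$. If no connected component of $G$ is isomorphic to the cycle $C_4$ or to the cycle $C_7$, then $\chi'_{ss}(G)\le 3$.
   Context: All graphs are finite, simple and undirected. For $M\subseteq E(G)$, $G[V(M)]$ denotes the subgraph of $G$ induced by the set of endvertices of edges of $M$. A set $M\subseteq E(G)$ is a semistrong matching if every edge of $M$ is incident with a vertex that has degree $1$ in $G[V(M)]$. For a positive integer $k$, a semistrong $k$-edge-coloring of $G$ is an assignment of at most $k$ colors to the edges of $G$ in which every color class is a semistrong matching. The semistrong chromatic index $\chi'_{ss}(G)$ is the least $k$ such that $G$ has a semistrong $k$-edge-coloring. $C_n$ denotes the cycle on $n$ vertices. *)

theory Defs
  imports Main
begin

definition simple_graph :: "'a set \<Rightarrow> 'a set set \<Rightarrow> bool" where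
  "simple_graph V E \<longleftrightarrow> finite V \<and> (\<forall>e\<in>E. e \<subseteq> V \<and> card e = 2)"

definition degree :: "'a set set \<Rightarrow> 'a \<Rightarrow> nat" where
  "degree E v = card {e\<in>E. v \<in> e}"

definition max_degree :: "'a set \<Rightarrow> 'a set set \<Rightarrow> nat" where
  "max_degree V E = Max (degree E ` V)"

definition adj :: "'a set set \<Rightarrow> 'a \<Rightarrow> 'a \<Rightarrow> bool" where
  "adj E u v \<longleftrightarrow> {u, v} \<in> E"

definition component :: "'a set \<Rightarrow> 'a set set \<Rightarrow> 'a set \<Rightarrow> bool" where
  "component V E S \<longleftrightarrow> (\<exists>v\<in>V. S = {u. (adj E)\<^sup>*\<^sup>* v u})"

definition induced_iso_cycle :: "'a set set \<Rightarrow> 'a set \<Rightarrow> nat \<Rightarrow> bool" where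
  "induced_iso_cycle E S n \<longleftrightarrow> n \<ge> 3 \<and>
     (\<exists>f. bij_betw f {..<n} S \<and>
          {e\<in>E. e \<subseteq> S} = {{f i, f (Suc i mod n)} | i. i < n})"

definition semistrong_matching :: "'a set set \<Rightarrow> 'a set set \<Rightarrow> bool" where
  "semistrong_matching E M \<longleftrightarrow> M \<subseteq> E \<and>
     (\<forall>e\<in>M. \<exists>v\<in>e. degree {e'\<in>E. e' \<subseteq> \<Union>M} v = 1)"

definition semistrong_coloring :: "'a set set \<Rightarrow> nat \<Rightarrow> ('a set \<Rightarrow> nat) \<Rightarrow> bool" where
  "semistrong_coloring E k c \<longleftrightarrow> (\<forall>e\<in>E. c e < k) \<and>
     (\<forall>i<k. semistrong_matching E {e\<in>E. c e = i})"

definition semistrong_chromatic_index :: "'a set set \<Rightarrow> nat" where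
  "semistrong_chromatic_index E = (LEAST k. k > 0 \<and> (\<exists>c. semistrong_coloring E k c))"

end

theory Submission
  imports Defs
begin


definition sc :: "nat \<Rightarrow> nat \<Rightarrow> nat" where "sc n i = Suc i mod n"
definition pd :: "nat \<Rightarrow> nat \<Rightarrow> nat" where "pd n i = (if i = 0 then n - 1 else i - 1)"
definition wd :: "nat \<Rightarrow> nat \<Rightarrow> nat" where
  "wd n i = (if n mod 3 = 1 \<and> 5 \<le> i then (i - 5) mod 3 else i mod 3)"

lemma sc_alt: "i < n \<Longrightarrow> sc n i = (if Suc i < n then Suc i else 0)"
  by (cases "Suc i = n") (auto simp: sc_def)

lemma m1: "Suc b mod 3 \<noteq> b mod (3::nat)" by (simp add: mod_Suc)
lemma m2: "Suc (Suc b) mod 3 \<noteq> b mod (3::nat)" by (simp add: mod_Suc)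

lemma word_ok:
  assumes "3 \<le> n" "n \<noteq> 4" "n \<noteq> 7" "i < n"
  shows "(wd n (pd n i) \<noteq> wd n i \<and> wd n (pd n (pd n i)) \<noteq> wd n i) \<or>
         (wd n (sc n i) \<noteq> wd n i \<and> wd n (sc n (sc n i)) \<noteq> wd n i)"
proof -
  have s1: "sc n i = (if Suc i < n then Suc i else 0)" using assms sc_alt by auto
  have s2: "sc n (sc n i) = (if Suc (sc n i) < n then Suc (sc n i) else 0)"
    using assms by (intro sc_alt) (simp add: sc_def)
  consider "i = 0" | "i = 1" | "n mod 3 = 1 \<and> (i = 5 \<or> i = 6)" | "2 \<le> i \<and> \<not> (n mod 3 = 1 \<and> (i = 5 \<or> i = 6))"
    by linarith
  then show ?thesis
  proof cases
    case 1
    have "sc n 0 = 1" "sc n 1 = 2" using assms by (simp_all add: sc_def)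
    then show ?thesis using 1 by (simp add: wd_def)
  next
    case 2
    show ?thesis
    proof (cases "n = 3")
      case True
      have "sc n 1 = 2" "sc n 2 = 0" using True by (simp_all add: sc_def)
      then show ?thesis using 2 True by (simp add: wd_def)
    next
      case False
      have "sc n 1 = 2" "sc n 2 = 3" using False assms by (simp_all add: sc_def)
      then show ?thesis using 2 by (simp add: wd_def)
    qed
  next
    case 3
    have "n \<ge> 10"
    proof (rule ccontr)
      assume "\<not> n \<ge> 10"
      then have "n \<in> {3,5,6,8,9}" using assms by auto
      then show False using 3 by auto
    qed
    then have "sc n 5 = 6" "sc n 6 = 7" "sc n 7 = 8" "sc n 8 = 9" using 3 by (simp_all add: sc_def)
    then show ?thesis using 3 by (auto simp: wd_def)
  next
    case 4
    then have p1: "pd n i = i - 1" and p2: "pd n (i - 1) = i - 2" by (auto simp: pd_def)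
    have "wd n (i - 1) \<noteq> wd n i \<and> wd n (i - 2) \<noteq> wd n i"
    proof (cases "n mod 3 = 1 \<and> 7 \<le> i")
      case True
      then obtain b where b: "i = b + 7" by (metis add.commute le_Suc_ex)
      have e1: "i - 5 = Suc (Suc b)" "i - 1 - 5 = Suc b" "i - 2 - 5 = b" using b by arith+
      have "wd n i = (i - 5) mod 3" "wd n (i - 1) = (i - 1 - 5) mod 3" "wd n (i - 2) = (i - 2 - 5) mod 3"
        using True unfolding wd_def by auto
      then show ?thesis unfolding e1 using m1 m2 by metis
    next
      case False
      then have "wd n i = i mod 3" "wd n (i - 1) = (i - 1) mod 3" "wd n (i - 2) = (i - 2) mod 3"
        using 4 unfolding wd_def by auto
      moreover obtain b where b: "i = b + 2" using 4 by (metis add.commute le_Suc_ex)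
      moreover have e1: "i = Suc (Suc b)" "i - 1 = Suc b" "i - 2 = b" using b by arith+
      ultimately show ?thesis using m1 m2 by metis
    qed
    then show ?thesis unfolding p1 p2 by blast
  qed
qed

lemma sc_lt: "0 < n \<Longrightarrow> sc n i < n" by (simp add: sc_def)
lemma pd_lt: "i < n \<Longrightarrow> pd n i < n" by (auto simp: pd_def)
lemma pd_sc: "i < n \<Longrightarrow> pd n (sc n i) = i"
  by (cases "Suc i < n") (auto simp: sc_alt pd_def)
lemma sc_pd: "i < n \<Longrightarrow> sc n (pd n i) = i"
  by (cases "i = 0") (auto simp: sc_alt pd_def)
lemma sc_eq_iff: "i < n \<Longrightarrow> j < n \<Longrightarrow> (j = sc n i) = (i = pd n j)"
  using pd_sc sc_pd by metis
lemma sc_neq: "3 \<le> n \<Longrightarrow> i < n \<Longrightarrow> sc n i \<noteq> i"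
  by (cases "Suc i < n") (auto simp: sc_alt)
lemma sc_sc_neq: "3 \<le> n \<Longrightarrow> i < n \<Longrightarrow> sc n (sc n i) \<noteq> i"
  by (cases "Suc i < n"; cases "Suc (Suc i) < n") (auto simp: sc_alt)
lemma sc_pd_neq: "3 \<le> n \<Longrightarrow> i < n \<Longrightarrow> sc n i \<noteq> pd n i"
  by (cases "Suc i < n"; cases "i = 0") (auto simp: sc_alt pd_def)


lemma three_nb:
  assumes "finite E" "degree E v \<le> 2" "{v,u1} \<in> E" "{v,u2} \<in> E" "{v,u3} \<in> E" "u1 \<noteq> u2"
  shows "u3 = u1 \<or> u3 = u2"
proof (rule ccontr)
  assume "\<not> ?thesis"
  then have "card {{v,u1},{v,u2},{v,u3}} = 3" using assms(6) by (auto simp: doubleton_eq_iff)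
  moreover have "{{v,u1},{v,u2},{v,u3}} \<subseteq> {e\<in>E. v\<in>e}" using assms by auto
  then have "card {{v,u1},{v,u2},{v,u3}} \<le> degree E v" unfolding degree_def
    by (intro card_mono) (auto simp: assms(1))
  ultimately show False using assms(2) by simp
qed

lemma card2_ex: "finite S \<Longrightarrow> card S \<le> 2 \<Longrightarrow> x \<in> S \<Longrightarrow> \<exists>y. S \<subseteq> {x,y}"
proof (cases "S \<subseteq> {x}")
  case True then show ?thesis by auto
next
  case False
  assume a: "finite S" "card S \<le> 2" "x \<in> S"
  then obtain y where y: "y \<in> S" "y \<noteq> x" using False by auto
  then have "{x,y} \<subseteq> S" using a by auto
  moreover have "card {x,y} = 2" using y by auto
  ultimately have "{x,y} = S" using a by (metis card_seteq)
  then show ?thesis by auto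
qed

lemma edge_other: "card e = 2 \<Longrightarrow> v \<in> e \<Longrightarrow> \<exists>w. w \<noteq> v \<and> e = {v,w}"
  by (metis card_2_iff insert_commute insertE singletonD)

lemma combine_side:
  assumes "semistrong_matching A MA" "MB \<subseteq> B" "\<Union>A \<inter> \<Union>B = {}" "e \<in> MA"
  shows "\<exists>v\<in>e. degree {e'\<in>A \<union> B. e' \<subseteq> \<Union>(MA \<union> MB)} v = 1"
proof -
  from assms(1,4) obtain y where y: "y \<in> e" "degree {e'\<in>A. e' \<subseteq> \<Union>MA} y = 1"
    unfolding semistrong_matching_def by blast
  have MA: "MA \<subseteq> A" using assms(1) unfolding semistrong_matching_def by blast
  have yA: "y \<in> \<Union>A" using y assms(4) MA by blast
  have "{x\<in>{e'\<in>A \<union> B. e' \<subseteq> \<Union>(MA \<union> MB)}. y \<in> x} = {x\<in>{e'\<in>A. e' \<subseteq> \<Union>MA}. y \<in> x}"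
  proof (intro equalityI subsetI)
    fix x assume x: "x \<in> {x\<in>{e'\<in>A \<union> B. e' \<subseteq> \<Union>(MA \<union> MB)}. y \<in> x}"
    then have "x \<notin> B" using yA assms(3) by blast
    with x have xA: "x \<in> A" by blast
    have "x \<subseteq> \<Union>MA"
    proof
      fix z assume "z \<in> x"
      then have "z \<in> \<Union>MA \<or> z \<in> \<Union>MB" using x by blast
      moreover have "z \<notin> \<Union>MB" using \<open>z \<in> x\<close> xA assms(2,3) by blast
      ultimately show "z \<in> \<Union>MA" by blast
    qed
    then show "x \<in> {x\<in>{e'\<in>A. e' \<subseteq> \<Union>MA}. y \<in> x}" using x xA by blast
  next
    fix x assume "x \<in> {x\<in>{e'\<in>A. e' \<subseteq> \<Union>MA}. y \<in> x}"
    then show "x \<in> {x\<in>{e'\<in>A \<union> B. e' \<subseteq> \<Union>(MA \<union> MB)}. y \<in> x}" by blast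
  qed
  then have "degree {e'\<in>A \<union> B. e' \<subseteq> \<Union>(MA \<union> MB)} y = 1"
    using y(2) unfolding degree_def by simp
  then show ?thesis using y(1) by blast
qed

lemma combine:
  assumes "semistrong_coloring A 3 cA" "semistrong_coloring B 3 cB" "\<Union>A \<inter> \<Union>B = {}" "A \<inter> B = {}"
  shows "semistrong_coloring (A \<union> B) 3 (\<lambda>e. if e \<in> A then cA e else cB e)"
  unfolding semistrong_coloring_def
proof (intro conjI allI impI ballI)
  fix e assume "e \<in> A \<union> B" then show "(if e \<in> A then cA e else cB e) < 3"
    using assms(1,2) unfolding semistrong_coloring_def by (cases "e \<in> A") simp_all
next
  fix i :: nat assume i: "i < 3"
  define MA where "MA = {e\<in>A. cA e = i}"
  define MB where "MB = {e\<in>B. cB e = i}"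
  have sA: "semistrong_matching A MA" using assms(1) i unfolding MA_def semistrong_coloring_def by simp
  have sB: "semistrong_matching B MB" using assms(2) i unfolding MB_def semistrong_coloring_def by simp
  have MAs: "MA \<subseteq> A" and MBs: "MB \<subseteq> B" unfolding MA_def MB_def by blast+
  have eq: "{e\<in>A \<union> B. (if e \<in> A then cA e else cB e) = i} = MA \<union> MB"
  proof (intro equalityI subsetI)
    fix x assume "x \<in> {e\<in>A \<union> B. (if e \<in> A then cA e else cB e) = i}"
    then show "x \<in> MA \<union> MB" unfolding MA_def MB_def by (cases "x \<in> A") simp_all
  next
    fix x assume "x \<in> MA \<union> MB"
    then show "x \<in> {e\<in>A \<union> B. (if e \<in> A then cA e else cB e) = i}"
      using assms(4) unfolding MA_def MB_def by (cases "x \<in> A") auto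
  qed
  have d: "\<Union>B \<inter> \<Union>A = {}" using assms(3) by blast
  show "semistrong_matching (A \<union> B) {e\<in>A \<union> B. (if e \<in> A then cA e else cB e) = i}"
    unfolding eq semistrong_matching_def
  proof (intro conjI ballI)
    show "MA \<union> MB \<subseteq> A \<union> B" using MAs MBs by blast
  next
    fix e assume "e \<in> MA \<union> MB"
    then show "\<exists>v\<in>e. degree {e'\<in>A \<union> B. e' \<subseteq> \<Union>(MA \<union> MB)} v = 1"
    proof
      assume "e \<in> MA" then show ?thesis
        using combine_side[OF sA MBs assms(3)] by blast
    next
      assume "e \<in> MB"
      then have "\<exists>v\<in>e. degree {e'\<in>B \<union> A. e' \<subseteq> \<Union>(MB \<union> MA)} v = 1"
        using combine_side[OF sB MAs d] by blast
      then show ?thesis by (simp add: Un_commute)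
    qed
  qed
qed



lemma leaf_ext:
  assumes fin: "finite E" and c2: "\<forall>e\<in>E. card e = 2" and deg: "\<forall>v. degree E v \<le> 2"
    and eE: "{u,v} \<in> E" and uv: "u \<noteq> v" and du: "degree E u = 1"
    and col: "semistrong_coloring (E - {{u,v}}) 3 c'"
  shows "\<exists>c. semistrong_coloring E 3 c"
proof -
  define e where "e = {u,v}"
  define E' where "E' = E - {e}"
  have col': "semistrong_coloring E' 3 c'" using col unfolding E'_def e_def .
  have uonly: "\<And>g. g \<in> E \<Longrightarrow> u \<in> g \<Longrightarrow> g = e"
  proof -
    fix g assume g: "g \<in> E" "u \<in> g"
    have "card {g\<in>E. u\<in>g} = 1" using du unfolding degree_def .
    then obtain x where x: "{g\<in>E. u\<in>g} = {x}" by (rule card_1_singletonE)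
    have "e \<in> {g\<in>E. u\<in>g}" using eE unfolding e_def by simp
    then have "e = x" using x by simp
    moreover have "g \<in> {g\<in>E. u\<in>g}" using g by simp
    then have "g = x" using x by simp
    ultimately show "g = e" by simp
  qed
  have unot: "\<And>g. g \<in> E' \<Longrightarrow> u \<notin> g" using uonly unfolding E'_def by blast
  define X where "X = \<Union>{h\<in>E'. v \<in> h}"
  define B where "B = {g\<in>E'. g \<inter> X \<noteq> {}}"
  have finE': "finite E'" using fin unfolding E'_def by simp
  have eE': "e \<in> E" "e \<notin> E'" using eE unfolding e_def E'_def by auto
  have "\<exists>g1 g2. B \<subseteq> {g1, g2}"
  proof (cases "{h\<in>E'. v \<in> h} = {}")
    case True
    then have "B = {}" unfolding B_def X_def by auto
    then show ?thesis by auto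
  next
    case False
    then obtain h where h: "h \<in> E'" "v \<in> h" by auto
    have "card h = 2" using c2 h(1) unfolding E'_def by simp
    from edge_other[OF this h(2)] obtain w where w: "w \<noteq> v" "h = {v,w}" by blast
    have vu: "{v,u} = e" unfolding e_def by blast
    have "w \<noteq> u"
    proof
      assume "w = u"
      then have "h = e" using w vu by simp
      then show False using h(1) unfolding E'_def by simp
    qed
    have hE: "{v,w} \<in> E" "{v,u} \<in> E" using h(1) w(2) eE' vu unfolding E'_def by auto
    have only: "{h\<in>E'. v \<in> h} = {h}"
    proof (intro equalityI subsetI)
      fix h' assume "h' \<in> {h\<in>E'. v \<in> h}"
      then have h': "h' \<in> E'" "v \<in> h'" by auto
      have "card h' = 2" using c2 h'(1) unfolding E'_def by simp
      from edge_other[OF this h'(2)] obtain w' where w': "h' = {v,w'}" by blast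
      have "{v,w'} \<in> E" using h' w' unfolding E'_def by auto
      then have "w' = w \<or> w' = u" using three_nb[OF fin deg[rule_format] hE(1) hE(2)] \<open>w \<noteq> u\<close> by blast
      moreover have "w' \<noteq> u" using h' w' unot by auto
      ultimately show "h' \<in> {h}" using w w' by auto
    qed (use h in auto)
    have X: "X = {v,w}" unfolding X_def only w by simp
    have "finite {g\<in>E. w\<in>g}" using fin by simp
    moreover have "card {g\<in>E. w\<in>g} \<le> 2" using deg unfolding degree_def by simp
    moreover have "h \<in> {g\<in>E. w\<in>g}" using h w unfolding E'_def by auto
    ultimately obtain g2 where g2: "{g\<in>E. w\<in>g} \<subseteq> {h, g2}" using card2_ex[of "{g\<in>E. w\<in>g}" h] by blast
    have "B \<subseteq> {h, g2}"
    proof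
      fix g assume "g \<in> B"
      then have g: "g \<in> E'" "v \<in> g \<or> w \<in> g" unfolding B_def X by auto
      show "g \<in> {h, g2}"
      proof (cases "v \<in> g")
        case True then show ?thesis using only g by auto
      next
        case False then show ?thesis using g g2 unfolding E'_def by auto
      qed
    qed
    then show ?thesis by blast
  qed
  then obtain g1 g2 where g12: "B \<subseteq> {g1, g2}" by blast
  have "\<exists>\<gamma><3. \<gamma> \<notin> c' ` B"
  proof (rule ccontr)
    assume "\<not> ?thesis"
    then have "{0,1,2::nat} \<subseteq> c' ` B" by auto
    also have "\<dots> \<subseteq> {c' g1, c' g2}" using g12 by blast
    finally have sub: "{0,1,2::nat} \<subseteq> {c' g1, c' g2}" .
    have "card {0,1,2::nat} \<le> card {c' g1, c' g2}" by (rule card_mono[OF _ sub]) simp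
    moreover have "card {c' g1, c' g2} \<le> 2" by (simp add: card_insert_le_m1)
    ultimately show False by simp
  qed
  then obtain \<gamma> where \<gamma>: "\<gamma> < 3" "\<gamma> \<notin> c' ` B" by blast
  define c where "c = c'(e := \<gamma>)"
  have c'lt: "\<And>g. g \<in> E' \<Longrightarrow> c' g < 3" using col' unfolding semistrong_coloring_def by blast
  have sm': "\<And>i. i < 3 \<Longrightarrow> semistrong_matching E' {g\<in>E'. c' g = i}"
    using col' unfolding semistrong_coloring_def by blast
  have E'E: "E' \<subseteq> E" unfolding E'_def by blast
  show ?thesis
  proof (rule exI[of _ c], unfold semistrong_coloring_def, intro conjI allI impI ballI)
    fix g assume "g \<in> E" then show "c g < 3"
      using c'lt \<gamma> unfolding c_def E'_def by (cases "g = e") auto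
  next
    fix i :: nat assume i: "i < 3"
    define M' where "M' = {g\<in>E'. c' g = i}"
    have sM': "semistrong_matching E' M'" using sm'[OF i] unfolding M'_def .
    have M'E': "M' \<subseteq> E'" unfolding M'_def by blast
    have unM': "u \<notin> \<Union>M'" using M'E' unot by blast
    show "semistrong_matching E {g\<in>E. c g = i}"
    proof (cases "i = \<gamma>")
      case False
      have eq: "{g\<in>E. c g = i} = M'"
        unfolding M'_def c_def E'_def using False by auto
      have eq2: "{e'\<in>E. e' \<subseteq> \<Union>M'} = {e'\<in>E'. e' \<subseteq> \<Union>M'}"
        using unM' unfolding E'_def e_def by blast
      show ?thesis unfolding eq semistrong_matching_def eq2
        using sM' E'E unfolding semistrong_matching_def by blast
    next
      case True
      have eq: "{g\<in>E. c g = i} = insert e M'"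
        unfolding M'_def c_def E'_def using True eE'(1) by auto
      have UM: "\<Union>(insert e M') = \<Union>M' \<union> {u,v}" unfolding e_def by blast
      have disj: "\<And>g. g \<in> M' \<Longrightarrow> g \<inter> X = {}"
        using \<gamma>(2) True unfolding M'_def B_def by blast
      have vX: "\<And>g. g \<in> E' \<Longrightarrow> v \<in> g \<Longrightarrow> g \<subseteq> X" unfolding X_def by blast
      show ?thesis unfolding eq semistrong_matching_def
      proof (intro conjI ballI)
        show "insert e M' \<subseteq> E" using eE'(1) M'E' E'E by blast
      next
        fix g assume "g \<in> insert e M'"
        then show "\<exists>y\<in>g. degree {e'\<in>E. e' \<subseteq> \<Union>(insert e M')} y = 1"
        proof
          assume ge: "g = e"
          have "{x\<in>{e'\<in>E. e' \<subseteq> \<Union>(insert e M')}. u \<in> x} = {e}"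
          proof (intro equalityI subsetI)
            fix x assume "x \<in> {x\<in>{e'\<in>E. e' \<subseteq> \<Union>(insert e M')}. u \<in> x}"
            then show "x \<in> {e}" using uonly by blast
          next
            fix x assume "x \<in> {e}" then show "x \<in> {x\<in>{e'\<in>E. e' \<subseteq> \<Union>(insert e M')}. u \<in> x}"
              using eE'(1) unfolding e_def by blast
          qed
          then have "degree {e'\<in>E. e' \<subseteq> \<Union>(insert e M')} u = 1" unfolding degree_def by simp
          then show ?thesis using ge unfolding e_def by blast
        next
          assume gM: "g \<in> M'"
          then obtain y where y: "y \<in> g" "degree {e'\<in>E'. e' \<subseteq> \<Union>M'} y = 1"
            using sM' unfolding semistrong_matching_def by blast
          have gE': "g \<in> E'" using gM M'E' by blast
          have yu: "y \<noteq> u" using y(1) gE' unot by blast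
          have yX: "y \<notin> X" using y(1) disj[OF gM] by blast
          have yv: "y \<noteq> v" using y(1) gE' vX yX by blast
          have "{x\<in>{e'\<in>E. e' \<subseteq> \<Union>(insert e M')}. y \<in> x} = {x\<in>{e'\<in>E'. e' \<subseteq> \<Union>M'}. y \<in> x}"
          proof (intro equalityI subsetI)
            fix x assume x: "x \<in> {x\<in>{e'\<in>E. e' \<subseteq> \<Union>(insert e M')}. y \<in> x}"
            then have xe: "x \<noteq> e" using yu yv unfolding e_def by blast
            then have xE': "x \<in> E'" using x unfolding E'_def by blast
            have "u \<notin> x" using unot xE' by blast
            moreover have "v \<notin> x" using vX[OF xE'] x yX by blast
            ultimately have "x \<subseteq> \<Union>M'" using x UM by blast
            then show "x \<in> {x\<in>{e'\<in>E'. e' \<subseteq> \<Union>M'}. y \<in> x}" using x xE' by blast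
          next
            fix x assume "x \<in> {x\<in>{e'\<in>E'. e' \<subseteq> \<Union>M'}. y \<in> x}"
            then show "x \<in> {x\<in>{e'\<in>E. e' \<subseteq> \<Union>(insert e M')}. y \<in> x}" using E'E by blast
          qed
          then have "degree {e'\<in>E. e' \<subseteq> \<Union>(insert e M')} y = 1" using y(2) unfolding degree_def by simp
          then show ?thesis using y(1) by blast
        qed
      qed
    qed
  qed
qed



fun walk :: "('a \<Rightarrow> 'a \<Rightarrow> 'a) \<Rightarrow> 'a \<Rightarrow> 'a \<Rightarrow> nat \<Rightarrow> 'a" where
  "walk g a b 0 = a"
| "walk g a b (Suc 0) = b"
| "walk g a b (Suc (Suc k)) = g (walk g a b k) (walk g a b (Suc k))"

lemma pd_mod: assumes "i < m" shows "(i + m - 1) mod m = pd m i"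
proof (cases "i = 0")
  case True then show ?thesis using assms by (simp add: pd_def)
next
  case False
  then have e: "i + m - 1 = (i - 1) + m" using assms by simp
  have "(i - 1 + m) mod m = i - 1" using assms by simp
  then show ?thesis unfolding e using False by (simp add: pd_def)
qed

lemma cycle_exists:
  assumes fin: "finite E" and c2: "\<forall>e\<in>E. card e = 2" and deg: "\<forall>v. degree E v \<le> 2"
    and d2: "\<forall>v\<in>\<Union>E. degree E v = 2" and ab: "{a,b} \<in> E"
  shows "\<exists>n f. 3 \<le> n \<and> inj_on f {..<n} \<and> {{f i, f (Suc i mod n)} | i. i < n} \<subseteq> E \<and>
     (\<forall>e\<in>E. e \<inter> f ` {..<n} \<noteq> {} \<longrightarrow> e \<in> {{f i, f (Suc i mod n)} | i. i < n})"
proof -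
  have nb: "\<And>v u1 u2 u3. {v,u1} \<in> E \<Longrightarrow> {v,u2} \<in> E \<Longrightarrow> {v,u3} \<in> E \<Longrightarrow> u1 \<noteq> u2 \<Longrightarrow> u3 = u1 \<or> u3 = u2"
    using three_nb[OF fin] deg by blast
  have other: "\<And>u v. {u,v} \<in> E \<Longrightarrow> \<exists>w. {v,w} \<in> E \<and> w \<noteq> u"
  proof -
    fix u v assume uv: "{u,v} \<in> E"
    have "v \<in> \<Union>E" using uv by blast
    then have "degree E v = 2" using d2 by blast
    then have "card {g\<in>E. v\<in>g} = 2" unfolding degree_def .
    then obtain g1 g2 where g: "{g\<in>E. v\<in>g} = {g1,g2}" "g1 \<noteq> g2" by (auto simp: card_2_iff)
    have "g1 \<in> {g\<in>E. v\<in>g}" "g2 \<in> {g\<in>E. v\<in>g}" unfolding g(1) by simp_all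
    then obtain g where gg: "g \<in> E" "v \<in> g" "g \<noteq> {u,v}" using g(2) by blast
    have "card g = 2" using c2 gg(1) by simp
    from edge_other[OF this gg(2)] obtain w where w: "w \<noteq> v" "g = {v,w}" by blast
    have "w \<noteq> u"
    proof
      assume "w = u" then have "g = {u,v}" using w(2) by blast
      then show False using gg(3) by simp
    qed
    then show "\<exists>w. {v,w} \<in> E \<and> w \<noteq> u" using gg(1) w(2) by blast
  qed
  define nx where "nx = (\<lambda>u v. SOME w. {v,w} \<in> E \<and> w \<noteq> u)"
  have nxp: "\<And>u v. {u,v} \<in> E \<Longrightarrow> {v, nx u v} \<in> E \<and> nx u v \<noteq> u"
  proof -
    fix u v assume "{u,v} \<in> E"
    from other[OF this] show "{v, nx u v} \<in> E \<and> nx u v \<noteq> u" unfolding nx_def by (rule someI_ex)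
  qed
  define x where "x = walk nx a b"
  have x0: "x 0 = a" "x (Suc 0) = b" unfolding x_def by simp_all
  have xs: "\<And>k. x (Suc (Suc k)) = nx (x k) (x (Suc k))" unfolding x_def by simp
  have P1: "\<And>k. {x k, x (Suc k)} \<in> E"
  proof -
    fix k show "{x k, x (Suc k)} \<in> E"
    proof (induction k)
      case 0 then show ?case using ab x0 by simp
    next
      case (Suc k)
      then show ?case using nxp[OF Suc] xs[of k] by simp
    qed
  qed
  have P1': "\<And>k. {x (Suc k), x k} \<in> E"
  proof -
    fix k have "{x (Suc k), x k} = {x k, x (Suc k)}" by blast
    then show "{x (Suc k), x k} \<in> E" using P1[of k] by simp
  qed
  have P2: "\<And>k. x (Suc (Suc k)) \<noteq> x k" using nxp[OF P1] xs by simp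
  have P3: "\<And>k. x k \<noteq> x (Suc k)"
  proof
    fix k assume "x k = x (Suc k)"
    then have "card {x k, x (Suc k)} = 1" by simp
    then show False using c2 P1[of k] by simp
  qed
  have det: "\<And>i j. x i = x j \<Longrightarrow> x (Suc i) = x (Suc j) \<Longrightarrow> x (Suc (Suc i)) = x (Suc (Suc j))"
  proof -
    fix i j assume ij: "x i = x j" "x (Suc i) = x (Suc j)"
    have e1: "{x (Suc i), x i} \<in> E" by (rule P1')
    have e2: "{x (Suc i), x (Suc (Suc i))} \<in> E" by (rule P1)
    have e3: "{x (Suc i), x (Suc (Suc j))} \<in> E" using P1[of "Suc j"] ij(2) by simp
    have "x i \<noteq> x (Suc (Suc i))" using P2[of i] by simp
    from nb[OF e1 e2 e3 this] have "x (Suc (Suc j)) = x i \<or> x (Suc (Suc j)) = x (Suc (Suc i))" .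
    moreover have "x (Suc (Suc j)) \<noteq> x i" using P2[of j] ij(1) by simp
    ultimately show "x (Suc (Suc i)) = x (Suc (Suc j))" by simp
  qed
  have finU: "finite (\<Union>E)"
  proof (rule finite_Union[OF fin])
    fix g assume "g \<in> E" then have "card g = 2" using c2 by simp
    then show "finite g" by (metis card.infinite zero_neq_numeral)
  qed
  have "range x \<subseteq> \<Union>E" using P1 by blast
  then have "finite (range x)" using finU by (rule finite_subset)
  then have "\<not> inj x" using finite_imageD infinite_UNIV_nat by blast
  then obtain i j where ij0: "i \<noteq> j" "x i = x j" unfolding inj_def by blast
  have "\<exists>i j. i < j \<and> x i = x j"
  proof (cases "i < j")
    case True then show ?thesis using ij0 by blast
  next
    case False then have "j < i" using ij0(1) by simp
    then show ?thesis using ij0(2) by metis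
  qed
  then obtain i1 j1 where ij1: "i1 < j1" "x i1 = x j1" by blast
  define m where "m = (LEAST m. \<exists>j<m. x j = x m)"
  have "\<exists>j<j1. x j = x j1" using ij1 by blast
  then have exm: "\<exists>j<m. x j = x m" unfolding m_def by (rule LeastI)
  have minm: "\<And>m' j. m' < m \<Longrightarrow> j < m' \<Longrightarrow> x j \<noteq> x m'"
  proof
    fix m' j assume a: "m' < m" "j < m'" "x j = x m'"
    then have "\<exists>j<m'. x j = x m'" by blast
    then have "m \<le> m'" unfolding m_def by (rule Least_le)
    then show False using a(1) by simp
  qed
  have injm: "inj_on x {..<m}"
  proof (rule inj_onI)
    fix i j assume a: "i \<in> {..<m}" "j \<in> {..<m}" "x i = x j"
    show "i = j"
    proof (rule ccontr)
      assume "i \<noteq> j"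
      then have "i < j \<or> j < i" by arith
      then show False using minm a by (metis lessThan_iff)
    qed
  qed
  obtain j0 where j0: "j0 < m" "x j0 = x m" using exm by blast
  obtain m' where m': "m = Suc m'" using j0(1) by (cases m) auto
  have j00: "j0 = 0"
  proof (rule ccontr)
    assume "j0 \<noteq> 0"
    then obtain j where j: "j0 = Suc j" by (cases j0) auto
    have e1: "{x m, x j} \<in> E" using P1'[of j] j j0(2) by simp
    have e2: "{x m, x (Suc (Suc j))} \<in> E" using P1[of "Suc j"] j j0(2) by simp
    have e3: "{x m, x m'} \<in> E" using P1'[of m'] m' by simp
    have "x j \<noteq> x (Suc (Suc j))" using P2[of j] by simp
    from nb[OF e1 e2 e3 this] have c: "x m' = x j \<or> x m' = x (Suc (Suc j))" .
    have jm: "Suc j \<le> m'" using j j0(1) m' by simp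
    show False
    proof (cases "x m' = x j")
      case True
      then show False using minm[of m' j] jm m' by simp
    next
      case False
      then have c2': "x m' = x (Suc (Suc j))" using c by simp
      consider "Suc (Suc j) < m'" | "Suc (Suc j) = m'" | "Suc j = m'" using jm by arith
      then show False
      proof cases
        case 1 then show False using minm[of m' "Suc (Suc j)"] c2' m' by simp
      next
        case 2
        then have "x (Suc (Suc (Suc j))) = x (Suc j)" using j j0(2) m' by simp
        then show False using P2[of "Suc j"] by simp
      next
        case 3
        then have "x m' = x (Suc m')" using j j0(2) m' by simp
        then show False using P3[of m'] by simp
      qed
    qed
  qed
  have xm: "x m = x 0" using j0 j00 by simp
  have m3: "3 \<le> m"
  proof (rule ccontr)
    assume "\<not> 3 \<le> m"
    then have "m = 1 \<or> m = 2" using j0(1) by arith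
    then show False
    proof
      assume "m = 1" then show False using xm P3[of 0] by simp
    next
      assume "m = 2" then have "x (Suc (Suc 0)) = x 0" using xm by (simp add: numeral_2_eq_2)
      then show False using P2[of 0] by simp
    qed
  qed
  have xm1: "x (Suc m) = x (Suc 0)"
  proof -
    have e1: "{x 0, x (Suc 0)} \<in> E" by (rule P1)
    have e2: "{x 0, x m'} \<in> E" using P1'[of m'] m' xm by simp
    have e3: "{x 0, x (Suc m)} \<in> E" using P1[of m] xm by simp
    have "Suc 0 \<noteq> m'" using m3 m' by simp
    then have "x (Suc 0) \<noteq> x m'" using injm m' m3 unfolding inj_on_def by (metis lessThan_iff lessI Suc_lessD numeral_3_eq_3 Suc_le_lessD)
    from nb[OF e1 e2 e3 this] have "x (Suc m) = x (Suc 0) \<or> x (Suc m) = x m'" .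
    moreover have "x (Suc m) \<noteq> x m'" using P2[of m'] m' by simp
    ultimately show ?thesis by simp
  qed
  have per: "\<And>k. x (k + m) = x k \<and> x (Suc k + m) = x (Suc k)"
  proof -
    fix k show "x (k + m) = x k \<and> x (Suc k + m) = x (Suc k)"
    proof (induction k)
      case 0 then show ?case using xm xm1 by simp
    next
      case (Suc k)
      then have "x (Suc (Suc (k + m))) = x (Suc (Suc k))" using det[of "k + m" k] by simp
      then show ?case using Suc by simp
    qed
  qed
  have pert: "\<And>t j. x (j + t * m) = x j"
  proof -
    fix t j show "x (j + t * m) = x j"
    proof (induction t)
      case 0 then show ?case by simp
    next
      case (Suc t)
      have "x (j + Suc t * m) = x ((j + t * m) + m)" by (simp add: algebra_simps)
      also have "\<dots> = x (j + t * m)" using per by blast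
      finally show ?case using Suc by simp
    qed
  qed
  have permod: "\<And>k. x (k mod m) = x k"
  proof -
    fix k have "x (k mod m + (k div m) * m) = x (k mod m)" by (rule pert)
    then show "x (k mod m) = x k" by simp
  qed
  define C where "C = {{x i, x (Suc i mod m)} | i. i < m}"
  have CE: "C \<subseteq> E" unfolding C_def using P1 permod by auto
  have closed: "\<forall>e\<in>E. e \<inter> x ` {..<m} \<noteq> {} \<longrightarrow> e \<in> C"
  proof (intro ballI impI)
    fix e assume eE: "e \<in> E" and "e \<inter> x ` {..<m} \<noteq> {}"
    then obtain i where i: "i < m" "x i \<in> e" by blast
    have "card e = 2" using c2 eE by simp
    from edge_other[OF this i(2)] obtain w where w: "w \<noteq> x i" "e = {x i, w}" by blast
    have e1: "{x i, x (Suc i)} \<in> E" by (rule P1)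
    have e2: "{x i, x (i + m - 1)} \<in> E"
    proof -
      have "Suc (i + m - 1) = i + m" using m3 by simp
      then have "{x (Suc (i + m - 1)), x (i + m - 1)} = {x i, x (i + m - 1)}" using per by simp
      then show ?thesis using P1'[of "i + m - 1"] by simp
    qed
    have e3: "{x i, w} \<in> E" using eE w by simp
    have pm: "x (i + m - 1) = x (pd m i)" using permod[of "i + m - 1"] pd_mod[OF i(1)] by simp
    have sm: "x (Suc i) = x (sc m i)" using permod[of "Suc i"] unfolding sc_def by simp
    have "sc m i \<noteq> pd m i" using sc_pd_neq m3 i(1) by simp
    then have "x (Suc i) \<noteq> x (i + m - 1)" unfolding pm sm using injm sc_lt pd_lt i(1) m3
      unfolding inj_on_def by (metis lessThan_iff not_gr_zero not_numeral_le_zero)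
    from nb[OF e1 e2 e3 this] have "w = x (Suc i) \<or> w = x (i + m - 1)" .
    then show "e \<in> C"
    proof
      assume "w = x (Suc i)"
      then have "e = {x i, x (Suc i mod m)}" using w permod by simp
      then show "e \<in> C" unfolding C_def using i(1) by blast
    next
      assume a: "w = x (i + m - 1)"
      have "Suc (pd m i) mod m = i" using sc_pd[OF i(1)] unfolding sc_def .
      then have "{x (pd m i), x (Suc (pd m i) mod m)} = {w, x i}" using a pm by simp
      then have "{x (pd m i), x (Suc (pd m i) mod m)} = e" using w(2) by blast
      moreover have "pd m i < m" using pd_lt i(1) .
      ultimately show "e \<in> C" unfolding C_def by blast
    qed
  qed
  show ?thesis using m3 injm CE closed unfolding C_def by blast
qed



lemma cyc_mem:
  assumes "inj_on f {..<n}" "i < n" "j < n"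
  shows "f j \<in> {f i, f (sc n i)} \<longleftrightarrow> (i = j \<or> i = pd n j)"
proof -
  have n0: "0 < n" using assms by simp
  have a: "f j = f i \<longleftrightarrow> j = i" using assms unfolding inj_on_def by auto
  have b: "f j = f (sc n i) \<longleftrightarrow> j = sc n i" using assms sc_lt[OF n0] unfolding inj_on_def by auto
  show ?thesis using a b sc_eq_iff[OF assms(2,3)] by auto
qed

lemma cyc_inj:
  assumes "inj_on f {..<n}" "3 \<le> n" "i < n" "j < n" "{f i, f (sc n i)} = {f j, f (sc n j)}"
  shows "i = j"
proof (rule ccontr)
  assume ne: "i \<noteq> j"
  have "f i \<in> {f j, f (sc n j)}" using assms(5) by blast
  then have "j = pd n i" using cyc_mem[OF assms(1,4,3)] ne by simp
  have n0: "0 < n" using assms by simp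
  have "f (sc n i) \<in> {f j, f (sc n j)}" using assms(5) by blast
  then have "j = sc n i \<or> j = pd n (sc n i)" using cyc_mem[OF assms(1,4) sc_lt[OF n0]] by simp
  then show False
    using \<open>j = pd n i\<close> sc_pd_neq[OF assms(2,3)] pd_sc[OF assms(3)] ne by auto
qed

lemma cycle_color:
  assumes n: "3 \<le> n" "n \<noteq> 4" "n \<noteq> 7" and inj: "inj_on f {..<n}"
  shows "\<exists>c. semistrong_coloring {{f i, f (Suc i mod n)} | i. i < n} 3 c"
proof -
  have n0: "0 < n" using n by simp
  define ed where "ed i = {f i, f (sc n i)}" for i
  have Ceq: "{{f i, f (Suc i mod n)} | i. i < n} = ed ` {..<n}" unfolding ed_def sc_def by auto
  have mem: "\<And>i j. i < n \<Longrightarrow> j < n \<Longrightarrow> f j \<in> ed i \<longleftrightarrow> (i = j \<or> i = pd n j)"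
    unfolding ed_def using cyc_mem[OF inj] by blast
  have edinj: "\<And>i j. i < n \<Longrightarrow> j < n \<Longrightarrow> ed i = ed j \<Longrightarrow> i = j"
    unfolding ed_def using cyc_inj[OF inj n(1)] by blast
  define idx where "idx e = (THE i. i < n \<and> ed i = e)" for e
  have idx: "\<And>i. i < n \<Longrightarrow> idx (ed i) = i"
    unfolding idx_def using edinj by (intro the_equality) auto
  define c where "c e = wd n (idx e)" for e
  have ced: "\<And>i. i < n \<Longrightarrow> c (ed i) = wd n i" unfolding c_def using idx by simp
  have edsub: "\<And>i. i < n \<Longrightarrow> ed i \<subseteq> f ` {..<n}" unfolding ed_def using sc_lt[OF n0] by auto
  show ?thesis unfolding Ceq semistrong_coloring_def
  proof (intro exI[of _ c] conjI allI impI ballI)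
    fix e assume "e \<in> ed ` {..<n}" then show "c e < 3" unfolding c_def wd_def by simp
  next
    fix \<gamma> :: nat assume "\<gamma> < 3"
    define M where "M = {e\<in>ed ` {..<n}. c e = \<gamma>}"
    have UMsub: "\<Union>M \<subseteq> f ` {..<n}" unfolding M_def using edsub by blast
    have UM: "\<And>j. j < n \<Longrightarrow> f j \<in> \<Union>M \<longleftrightarrow> (wd n j = \<gamma> \<or> wd n (pd n j) = \<gamma>)"
    proof -
      fix j assume j: "j < n"
      have "f j \<in> \<Union>M \<longleftrightarrow> (\<exists>i<n. wd n i = \<gamma> \<and> f j \<in> ed i)"
        unfolding M_def using ced by auto
      also have "\<dots> \<longleftrightarrow> (\<exists>i<n. wd n i = \<gamma> \<and> (i = j \<or> i = pd n j))" using mem j by auto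
      also have "\<dots> \<longleftrightarrow> (wd n j = \<gamma> \<or> wd n (pd n j) = \<gamma>)" using j pd_lt by auto
      finally show "f j \<in> \<Union>M \<longleftrightarrow> (wd n j = \<gamma> \<or> wd n (pd n j) = \<gamma>)" .
    qed
    show "semistrong_matching (ed ` {..<n}) {e\<in>ed ` {..<n}. c e = \<gamma>}"
      unfolding semistrong_matching_def M_def[symmetric]
    proof (intro conjI ballI)
      show "M \<subseteq> ed ` {..<n}" unfolding M_def by blast
    next
      fix e assume "e \<in> M"
      then obtain i where i: "i < n" "e = ed i" "wd n i = \<gamma>" unfolding M_def using ced by auto
      have si: "sc n i < n" using sc_lt[OF n0] .
      have pi: "pd n i < n" using pd_lt[OF i(1)] .
      have edi: "ed i \<subseteq> \<Union>M"
      proof -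
        have "f i \<in> \<Union>M" using UM[OF i(1)] i(3) by simp
        moreover have "f (sc n i) \<in> \<Union>M" using UM[OF si] pd_sc[OF i(1)] i(3) by simp
        ultimately show ?thesis unfolding ed_def by blast
      qed
      have ediC: "ed i \<in> ed ` {..<n}" using i(1) by blast
      from word_ok[OF n i(1)] show "\<exists>v\<in>e. degree {e'\<in>ed ` {..<n}. e' \<subseteq> \<Union>M} v = 1"
      proof
        assume w: "wd n (pd n i) \<noteq> wd n i \<and> wd n (pd n (pd n i)) \<noteq> wd n i"
        have "{x\<in>{e'\<in>ed ` {..<n}. e' \<subseteq> \<Union>M}. f i \<in> x} = {ed i}"
        proof (intro equalityI subsetI)
          fix x assume x: "x \<in> {x\<in>{e'\<in>ed ` {..<n}. e' \<subseteq> \<Union>M}. f i \<in> x}"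
          then obtain j where j: "j < n" "x = ed j" by blast
          have "j = i \<or> j = pd n i" using mem[OF j(1) i(1)] x j by blast
          moreover have "j \<noteq> pd n i"
          proof
            assume "j = pd n i"
            then have "f (pd n i) \<in> \<Union>M" using x j unfolding ed_def by blast
            then show False using UM[OF pi] w i(3) by simp
          qed
          ultimately show "x \<in> {ed i}" using j by simp
        next
          fix x assume "x \<in> {ed i}"
          then show "x \<in> {x\<in>{e'\<in>ed ` {..<n}. e' \<subseteq> \<Union>M}. f i \<in> x}"
            using edi ediC unfolding ed_def by blast
        qed
        then have "degree {e'\<in>ed ` {..<n}. e' \<subseteq> \<Union>M} (f i) = 1" unfolding degree_def by simp
        moreover have "f i \<in> e" using i(2) unfolding ed_def by blast
        ultimately show ?thesis by blast
      next
        assume w: "wd n (sc n i) \<noteq> wd n i \<and> wd n (sc n (sc n i)) \<noteq> wd n i"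
        have ssi: "sc n (sc n i) < n" using sc_lt[OF n0] .
        have "{x\<in>{e'\<in>ed ` {..<n}. e' \<subseteq> \<Union>M}. f (sc n i) \<in> x} = {ed i}"
        proof (intro equalityI subsetI)
          fix x assume x: "x \<in> {x\<in>{e'\<in>ed ` {..<n}. e' \<subseteq> \<Union>M}. f (sc n i) \<in> x}"
          then obtain j where j: "j < n" "x = ed j" by blast
          have "j = sc n i \<or> j = pd n (sc n i)" using mem[OF j(1) si] x j by blast
          then have "j = sc n i \<or> j = i" using pd_sc[OF i(1)] by simp
          moreover have "j \<noteq> sc n i"
          proof
            assume "j = sc n i"
            then have "f (sc n (sc n i)) \<in> \<Union>M" using x j unfolding ed_def by blast
            then show False using UM[OF ssi] w i(3) pd_sc[OF si] by simp
          qed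
          ultimately show "x \<in> {ed i}" using j by simp
        next
          fix x assume "x \<in> {ed i}"
          then show "x \<in> {x\<in>{e'\<in>ed ` {..<n}. e' \<subseteq> \<Union>M}. f (sc n i) \<in> x}"
            using edi ediC unfolding ed_def by blast
        qed
        then have "degree {e'\<in>ed ` {..<n}. e' \<subseteq> \<Union>M} (f (sc n i)) = 1" unfolding degree_def by simp
        moreover have "f (sc n i) \<in> e" using i(2) unfolding ed_def by blast
        ultimately show ?thesis by blast
      qed
    qed
  qed
qed



definition noC47 :: "'a set set \<Rightarrow> bool" where
  "noC47 E \<longleftrightarrow> (\<forall>S n f. n \<in> {4,7} \<and> bij_betw f {..<n} S \<and>
      {e\<in>E. e \<subseteq> S} = {{f i, f (Suc i mod n)} | i. i < n} \<longrightarrow> (\<exists>e\<in>E. e \<inter> S \<noteq> {} \<and> \<not> e \<subseteq> S))"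

lemma cyc_edge_in:
  assumes "{e\<in>E. e \<subseteq> S} = {{f i, f (Suc i mod n)} | i. i < n}" "i < n"
  shows "{f i, f (Suc i mod n)} \<in> E"
proof -
  have "{f i, f (Suc i mod n)} \<in> {{f i, f (Suc i mod n)} | i. i < n}" using assms(2) by blast
  then have "{f i, f (Suc i mod n)} \<in> {e\<in>E. e \<subseteq> S}" by (simp only: assms(1))
  then show ?thesis by simp
qed

lemma noC47_mono:
  assumes fin: "finite E" and c2: "\<forall>e\<in>E. card e = 2" and deg: "\<forall>v. degree E v \<le> 2"
    and sub: "E' \<subseteq> E" and nc: "noC47 E"
  shows "noC47 E'"
  unfolding noC47_def
proof (intro allI impI)
  fix S n f assume a: "n \<in> {4,7} \<and> bij_betw f {..<n} S \<and> {e\<in>E'. e \<subseteq> S} = {{f i, f (Suc i mod n)} | i. i < n}"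
  then have n: "n \<in> {4,7}" and bij: "bij_betw f {..<n} S"
    and eq: "{e\<in>E'. e \<subseteq> S} = {{f i, f (Suc i mod n)} | i. i < n}" by auto
  have n3: "3 \<le> n" using n by auto
  have inj: "inj_on f {..<n}" and S: "S = f ` {..<n}" using bij unfolding bij_betw_def by auto
  show "\<exists>e\<in>E'. e \<inter> S \<noteq> {} \<and> \<not> e \<subseteq> S"
  proof (rule ccontr)
    assume "\<not> ?thesis"
    then have cl': "\<forall>e\<in>E'. e \<inter> S \<noteq> {} \<longrightarrow> e \<subseteq> S" by blast
    have edE': "\<And>i. i < n \<Longrightarrow> {f i, f (sc n i)} \<in> E'"
      using cyc_edge_in[OF eq] unfolding sc_def by blast
    have key: "\<And>e. e \<in> E \<Longrightarrow> e \<inter> S \<noteq> {} \<Longrightarrow> e \<in> E'"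
    proof (rule ccontr)
      fix e assume e: "e \<in> E" "e \<inter> S \<noteq> {}" "e \<notin> E'"
      then obtain i where i: "i < n" "f i \<in> e" using S by blast
      have pi: "pd n i < n" using pd_lt i(1) .
      define e1 where "e1 = {f i, f (sc n i)}"
      define e2 where "e2 = {f (pd n i), f (sc n (pd n i))}"
      have e1E: "e1 \<in> E'" "e2 \<in> E'" using edE' i(1) pi unfolding e1_def e2_def by auto
      have "e1 \<noteq> e2"
      proof
        assume "e1 = e2"
        then have "i = pd n i" using cyc_inj[OF inj n3 i(1) pi] unfolding e1_def e2_def by blast
        then have "sc n i = i" using sc_pd[OF i(1)] by simp
        then show False using sc_neq[OF n3 i(1)] by simp
      qed
      have fe1: "f i \<in> e1" unfolding e1_def by simp
      have fe2: "f i \<in> e2" unfolding e2_def sc_pd[OF i(1)] by simp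
      have "e \<noteq> e1" "e \<noteq> e2" using e(3) e1E by auto
      then have "card {e, e1, e2} = 3" using \<open>e1 \<noteq> e2\<close> by simp
      moreover have ss: "{e, e1, e2} \<subseteq> {g\<in>E. f i \<in> g}" using e(1) i(2) e1E sub fe1 fe2 by blast
      have "card {e, e1, e2} \<le> degree E (f i)" unfolding degree_def
        using card_mono[OF _ ss] fin by simp
      ultimately show False using deg[rule_format, of "f i"] by linarith
    qed
    have eqE: "{e\<in>E. e \<subseteq> S} = {{f i, f (Suc i mod n)} | i. i < n}"
      unfolding eq[symmetric]
    proof (intro equalityI subsetI)
      fix e assume e: "e \<in> {e\<in>E. e \<subseteq> S}"
      then have "e \<noteq> {}" using c2 by fastforce
      then have "e \<inter> S \<noteq> {}" using e by blast
      then show "e \<in> {e\<in>E'. e \<subseteq> S}" using key e by blast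
    next
      fix e assume "e \<in> {e\<in>E'. e \<subseteq> S}" then show "e \<in> {e\<in>E. e \<subseteq> S}" using sub by blast
    qed
    have clE: "\<forall>e\<in>E. e \<inter> S \<noteq> {} \<longrightarrow> e \<subseteq> S" using key cl' by blast
    have H: "n \<in> {4,7} \<and> bij_betw f {..<n} S \<and> {e\<in>E. e \<subseteq> S} = {{f i, f (Suc i mod n)} | i. i < n}"
      using n bij eqE by simp
    have "\<exists>e\<in>E. e \<inter> S \<noteq> {} \<and> \<not> e \<subseteq> S" using nc[unfolded noC47_def, rule_format, OF H] .
    then show False using clE by blast
  qed
qed

lemma core:
  "finite E \<Longrightarrow> \<forall>e\<in>E. card e = 2 \<Longrightarrow> \<forall>v. degree E v \<le> 2 \<Longrightarrow> noC47 E \<Longrightarrow> \<exists>c. semistrong_coloring E 3 c"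
proof (induction "card E" arbitrary: E rule: less_induct)
  case less
  note fin = less.prems(1) and c2 = less.prems(2) and deg = less.prems(3) and nc = less.prems(4)
  have sub_ok: "\<And>E'. E' \<subseteq> E \<Longrightarrow> card E' < card E \<Longrightarrow> \<exists>c. semistrong_coloring E' 3 c"
  proof -
    fix E' assume E': "E' \<subseteq> E" "card E' < card E"
    have "finite E'" using fin E'(1) finite_subset by blast
    moreover have "\<forall>e\<in>E'. card e = 2" using c2 E'(1) by blast
    moreover have "\<forall>v. degree E' v \<le> 2"
    proof
      fix v have "degree E' v \<le> degree E v" unfolding degree_def using fin E'(1) by (intro card_mono) auto
      then show "degree E' v \<le> 2" using deg le_trans by blast
    qed
    moreover have "noC47 E'" using noC47_mono[OF fin c2 deg E'(1) nc] .
    ultimately show "\<exists>c. semistrong_coloring E' 3 c" using less.hyps E'(2) by blast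
  qed
  show ?case
  proof (cases "\<exists>e\<in>E. \<exists>u\<in>e. degree E u = 1")
    case True
    then obtain e u where eu: "e \<in> E" "u \<in> e" "degree E u = 1" by blast
    have "card e = 2" using c2 eu(1) by simp
    from edge_other[OF this eu(2)] obtain v where v: "v \<noteq> u" "e = {u,v}" by blast
    have "card (E - {e}) < card E" using card_Diff1_less[OF fin eu(1)] .
    then obtain c' where c': "semistrong_coloring (E - {e}) 3 c'" using sub_ok by blast
    show ?thesis using leaf_ext[OF fin c2 deg, of u v c'] eu v c' by simp
  next
    case False
    show ?thesis
    proof (cases "E = {}")
      case True
      show ?thesis unfolding True semistrong_coloring_def semistrong_matching_def by simp
    next
      case ne: False
      then obtain e0 where e0: "e0 \<in> E" by blast
      have "card e0 = 2" using c2 e0 by simp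
      then obtain a b where ab: "e0 = {a,b}" "a \<noteq> b" by (auto simp: card_2_iff)
      have d2: "\<forall>v\<in>\<Union>E. degree E v = 2"
      proof
        fix v assume "v \<in> \<Union>E"
        then obtain g where g: "g \<in> E" "v \<in> g" by blast
        have "{g\<in>E. v\<in>g} \<noteq> {}" using g by blast
        then have "degree E v \<noteq> 0" unfolding degree_def using fin by simp
        moreover have "degree E v \<noteq> 1" using False g by blast
        moreover have "degree E v \<le> 2" using deg by blast
        ultimately show "degree E v = 2" by linarith
      qed
      have abE: "{a,b} \<in> E" using ab e0 by simp
      from cycle_exists[OF fin c2 deg d2 abE]
      obtain n f where nf0: "3 \<le> n \<and> inj_on f {..<n} \<and> {{f i, f (Suc i mod n)} | i. i < n} \<subseteq> E \<and>
          (\<forall>e\<in>E. e \<inter> f ` {..<n} \<noteq> {} \<longrightarrow> e \<in> {{f i, f (Suc i mod n)} | i. i < n})"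
        by iprover
      have nf1: "3 \<le> n" using nf0 by iprover
      have nf2: "inj_on f {..<n}" using nf0 by iprover
      have nf3: "{{f i, f (Suc i mod n)} | i. i < n} \<subseteq> E" using nf0 by iprover
      have nf4: "\<forall>e\<in>E. e \<inter> f ` {..<n} \<noteq> {} \<longrightarrow> e \<in> {{f i, f (Suc i mod n)} | i. i < n}"
        using nf0 by iprover
      note nf = nf1 nf2 nf3 nf4
      define C where "C = {{f i, f (Suc i mod n)} | i. i < n}"
      define S where "S = f ` {..<n}"
      have CE: "C \<subseteq> E" using nf(3) unfolding C_def .
      have clo: "\<forall>e\<in>E. e \<inter> S \<noteq> {} \<longrightarrow> e \<in> C" using nf(4) unfolding C_def S_def .
      have CS: "\<And>g. g \<in> C \<Longrightarrow> g \<subseteq> S"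
      proof -
        fix g assume "g \<in> C"
        then obtain i where i: "i < n" "g = {f i, f (Suc i mod n)}" unfolding C_def by blast
        have "Suc i mod n < n" using nf(1) by simp
        then show "g \<subseteq> S" using i unfolding S_def by auto
      qed
      have n47: "n \<noteq> 4 \<and> n \<noteq> 7"
      proof (rule ccontr)
        assume "\<not> ?thesis" then have n: "n \<in> {4,7}" by auto
        have bij: "bij_betw f {..<n} S" using nf(2) unfolding S_def bij_betw_def by simp
        have eqC: "{e\<in>E. e \<subseteq> S} = C"
        proof (intro equalityI subsetI)
          fix e assume e: "e \<in> {e\<in>E. e \<subseteq> S}"
          then have "e \<noteq> {}" using c2 by fastforce
          then have "e \<inter> S \<noteq> {}" using e by blast
          then show "e \<in> C" using clo e by blast
        next
          fix e assume "e \<in> C" then show "e \<in> {e\<in>E. e \<subseteq> S}" using CE CS by blast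
        qed
        have H: "n \<in> {4,7} \<and> bij_betw f {..<n} S \<and> {e\<in>E. e \<subseteq> S} = {{f i, f (Suc i mod n)} | i. i < n}"
          using n bij eqC unfolding C_def by simp
        have "\<exists>e\<in>E. e \<inter> S \<noteq> {} \<and> \<not> e \<subseteq> S" using nc[unfolded noC47_def, rule_format, OF H] .
        then show False using clo CS by blast
      qed
      obtain cC where cC: "semistrong_coloring C 3 cC"
        using cycle_color[OF nf(1) _ _ nf(2)] n47 unfolding C_def by blast
      have "{f 0, f (Suc 0 mod n)} \<in> C" unfolding C_def using nf(1) by auto
      then have ps: "E - C \<subset> E" using CE by blast
      have "card (E - C) < card E" using psubset_card_mono[OF fin ps] .
      then obtain cR where cR: "semistrong_coloring (E - C) 3 cR" using sub_ok by blast
      have disj: "\<Union>C \<inter> \<Union>(E - C) = {}"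
      proof (rule ccontr)
        assume "\<not> ?thesis"
        then obtain y g h where "y \<in> g" "g \<in> C" "y \<in> h" "h \<in> E - C" by blast
        then show False using clo CS by blast
      qed
      have "C \<inter> (E - C) = {}" by blast
      from combine[OF cC cR disj this] have "semistrong_coloring (C \<union> (E - C)) 3 (\<lambda>e. if e \<in> C then cC e else cR e)" .
      moreover have "C \<union> (E - C) = E" using CE by blast
      ultimately show ?thesis by auto
    qed
  qed
qed

theorem theorem1:
  fixes V :: "'a set" and E :: "'a set set"
  assumes "simple_graph V E"
    and "max_degree V E = 2"
    and "\<forall>S. component V E S \<longrightarrow> \<not> induced_iso_cycle E S 4 \<and> \<not> induced_iso_cycle E S 7"
  shows "semistrong_chromatic_index E \<le> 3"
proof -
  from assms(1) have finV: "finite V" and eV: "\<forall>e\<in>E. e \<subseteq> V \<and> card e = 2"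
    unfolding simple_graph_def by auto
  have "E \<subseteq> Pow V" using eV by blast
  then have finE: "finite E" using finV by (meson finite_Pow_iff finite_subset)
  have c2: "\<forall>e\<in>E. card e = 2" using eV by blast
  have deg: "\<forall>v. degree E v \<le> 2"
  proof
    fix v show "degree E v \<le> 2"
    proof (cases "v \<in> V")
      case True then have "degree E v \<le> Max (degree E ` V)" using finV by simp
      then show ?thesis using assms(2) unfolding max_degree_def by simp
    next
      case False then have "{e\<in>E. v\<in>e} = {}" using eV by blast
      then show ?thesis unfolding degree_def by (metis card.empty zero_le)
    qed
  qed
  have nc: "noC47 E"
    unfolding noC47_def
  proof (intro allI impI)
    fix S n f assume a: "n \<in> {4,7} \<and> bij_betw f {..<n} S \<and> {e\<in>E. e \<subseteq> S} = {{f i, f (Suc i mod n)} | i. i < n}"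
    then have n: "n \<in> {4,7}" and bij: "bij_betw f {..<n} S"
      and eq: "{e\<in>E. e \<subseteq> S} = {{f i, f (Suc i mod n)} | i. i < n}" by auto
    have S: "S = f ` {..<n}" using bij unfolding bij_betw_def by auto
    have n0: "0 < n" using n by auto
    show "\<exists>e\<in>E. e \<inter> S \<noteq> {} \<and> \<not> e \<subseteq> S"
    proof (rule ccontr)
      assume "\<not> ?thesis" then have cl: "\<forall>e\<in>E. e \<inter> S \<noteq> {} \<longrightarrow> e \<subseteq> S" by blast
      have ed: "\<And>i. i < n \<Longrightarrow> {f i, f (Suc i mod n)} \<in> E" using cyc_edge_in[OF eq] by blast
      have f0V: "f 0 \<in> V" using ed[OF n0] eV by blast
      have reach: "\<And>i. i < n \<Longrightarrow> (adj E)\<^sup>*\<^sup>* (f 0) (f i)"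
      proof -
        fix i show "i < n \<Longrightarrow> (adj E)\<^sup>*\<^sup>* (f 0) (f i)"
        proof (induction i)
          case 0 show ?case by simp
        next
          case (Suc i)
          then have i: "i < n" by simp
          have "{f i, f (Suc i mod n)} \<in> E" using ed[OF i] .
          then have "adj E (f i) (f (Suc i))" using Suc.prems unfolding adj_def by simp
          then show ?case using Suc.IH i by (meson rtranclp.rtrancl_into_rtrancl)
        qed
      qed
      have Sc: "S = {u. (adj E)\<^sup>*\<^sup>* (f 0) u}"
      proof (intro equalityI subsetI)
        fix y assume "y \<in> S" then obtain i where "i < n" "y = f i" using S by auto
        then show "y \<in> {u. (adj E)\<^sup>*\<^sup>* (f 0) u}" using reach by simp
      next
        fix y assume "y \<in> {u. (adj E)\<^sup>*\<^sup>* (f 0) u}"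
        then have "(adj E)\<^sup>*\<^sup>* (f 0) y" by simp
        then show "y \<in> S"
        proof (induction rule: rtranclp_induct)
          case base show ?case using S n0 by auto
        next
          case (step y z)
          then have yz1: "{y,z} \<in> E" unfolding adj_def by simp
          have yz2: "{y,z} \<inter> S \<noteq> {}" using step.IH by blast
          have "{y,z} \<subseteq> S" by (rule cl[rule_format, OF yz1 yz2])
          then show "z \<in> S" by simp
        qed
      qed
      have "component V E S" unfolding component_def using f0V Sc by blast
      moreover have "induced_iso_cycle E S n" unfolding induced_iso_cycle_def using n bij eq by auto
      ultimately show False using assms(3) n by auto
    qed
  qed
  obtain c where "semistrong_coloring E 3 c" using core[OF finE c2 deg nc] by blast
  then show ?thesis unfolding semistrong_chromatic_index_def by (intro Least_le) auto
qed


end
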